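(* Let $N\ge 2$ and let $p$ be a star path of length $N$ with edge matrix $E$. Every line of reflective symmetry of the shape of $p$ is one of the candidate lines listed below, so the order of reflective symmetry satisfies $0\le O_{ref}\le N$. The candidate lines are: for $N$ even, the $N/2$ lines through a pair of opposite nodes $j$ and $j+N/2$ ($0\le j<N/2$) and the $N/2$ lines passing between the adjacent nodes $j,j+1$ and between the opposite adjacent nodes $j+N/2,\,j+N/2+1$ ($0\le j<N/2$); for $N$ odd, the $N$ lines each passing through exactly one node $j$ (and between the two nodes opposite to it). Moreover, a candidate line is a line of reflective symmetry if and only if: (i) $e_{1n}=-e_{2n}$ for each node $n$ intersected by the line, and (ii) the remaining columns form a negated palindrome with respect to the line, meaning that for every node $n$ not on the line, column $n'$ of $E$ equals the column obtained by negating both entries of column $n$ and re-sorting them in nondecreasing order, where $n'$ is the mirror image of $n$ across the line (i.e. $n'=(c-n)\bmod N$ with $c=2j$ for a line through node $j$ and $c=2j+1$ for a line between nodes $j$ and $j+1$).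
   Context: A path of length $N$ is a vector $p=(p_0,\dots,p_{N-1})$ whose entries are the integers $0,\dots,N-1$ in some order; indices are cyclic, $p_N=p_0$, $s_{-1}=s_{N-1}$; $x\bmod N$ denotes the remainder in $\{0,\dots,N-1\}$. Nodes $0,\dots,N-1$ are placed at equally spaced points clockwise around a circle; the shape of $p$ is the set of chords joining node $p_n$ to node $p_{n+1}$. A line of reflective symmetry is a line through the center of the circle such that reflection across it maps the shape onto itself; $O_{ref}$ is the number of such lines. The path differences are $d_n=p_{n+1}-p_n$, and the steps are $s_n=d_n$ if $|d_n|<N/2$; $s_n=N/2$ if $|d_n|=N/2$; $s_n=d_n-N$ if $d_n>N/2$; $s_n=d_n+N$ if $d_n<-N/2$. $p$ is a star path if $|s_n|\neq1$ for all $n$. The edge matrix $E=(e_{in})\in\mathbb{Z}^{2\times N}$: for node $n$ let $k$ be the index with $p_k=n$; take $s_k$ and $-s_{k-1}$, replace each by $0$ if its absolute value equals $N/2$, and let $e_{1n}\le e_{2n}$ be these two integers sorted in nondecreasing order. *)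

theory Defs
  imports "HOL-Analysis.Analysis"
begin

definition node :: "nat \<Rightarrow> nat \<Rightarrow> complex" where
  "node N k = cis (- 2 * pi * real k / real N)"

text \<open>Direction of the line passing between adjacent nodes j and j+1 (midpoint of the arc).\<close>
definition mid_dir :: "nat \<Rightarrow> nat \<Rightarrow> complex" where
  "mid_dir N j = cis (- pi * real (2 * j + 1) / real N)"

definition line_through :: "complex \<Rightarrow> complex set" where
  "line_through u = {complex_of_real t * u | t. True}"

text \<open>Reflection across the line through the origin with direction u (u nonzero).\<close>
definition reflect :: "complex \<Rightarrow> complex \<Rightarrow> complex" where
  "reflect u z = (u / cnj u) * cnj z"

definition is_path :: "nat \<Rightarrow> (nat \<Rightarrow> nat) \<Rightarrow> bool" where
  "is_path N p \<longleftrightarrow> bij_betw p {..<N} {..<N}"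

definition shape :: "nat \<Rightarrow> (nat \<Rightarrow> nat) \<Rightarrow> complex set set" where
  "shape N p = {closed_segment (node N (p n)) (node N (p (Suc n mod N))) | n. n < N}"

definition is_sym_line :: "nat \<Rightarrow> (nat \<Rightarrow> nat) \<Rightarrow> complex set \<Rightarrow> bool" where
  "is_sym_line N p L \<longleftrightarrow>
     (\<exists>u. u \<noteq> 0 \<and> L = line_through u \<and> (\<lambda>C. reflect u ` C) ` shape N p = shape N p)"

definition O_ref :: "nat \<Rightarrow> (nat \<Rightarrow> nat) \<Rightarrow> nat" where
  "O_ref N p = card {L. is_sym_line N p L}"

definition pdiff :: "nat \<Rightarrow> (nat \<Rightarrow> nat) \<Rightarrow> nat \<Rightarrow> int" where
  "pdiff N p n = int (p (Suc n mod N)) - int (p n)"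

definition step :: "nat \<Rightarrow> (nat \<Rightarrow> nat) \<Rightarrow> nat \<Rightarrow> int" where
  "step N p n = (let d = pdiff N p n in
     if 2 * \<bar>d\<bar> < int N then d
     else if 2 * \<bar>d\<bar> = int N then int N div 2
     else if d > 0 then d - int N
     else d + int N)"

definition star_path :: "nat \<Rightarrow> (nat \<Rightarrow> nat) \<Rightarrow> bool" where
  "star_path N p \<longleftrightarrow> is_path N p \<and> (\<forall>n<N. \<bar>step N p n\<bar> \<noteq> 1)"

definition zero_half :: "nat \<Rightarrow> int \<Rightarrow> int" where
  "zero_half N x = (if 2 * \<bar>x\<bar> = int N then 0 else x)"

definition pos :: "nat \<Rightarrow> (nat \<Rightarrow> nat) \<Rightarrow> nat \<Rightarrow> nat" where
  "pos N p n = (THE k. k < N \<and> p k = n)"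

text \<open>Column n of the edge matrix: (e_{1n}, e_{2n}).\<close>
definition edge_col :: "nat \<Rightarrow> (nat \<Rightarrow> nat) \<Rightarrow> nat \<Rightarrow> int \<times> int" where
  "edge_col N p n = (let k = pos N p n;
                         a = zero_half N (step N p k);
                         b = zero_half N (- step N p ((k + N - 1) mod N))
                     in (min a b, max a b))"

definition neg_sort :: "int \<times> int \<Rightarrow> int \<times> int" where
  "neg_sort x = (min (- fst x) (- snd x), max (- fst x) (- snd x))"

definition candidate_lines :: "nat \<Rightarrow> complex set set" where
  "candidate_lines N = (if even N
     then {line_through (node N j) | j. j < N div 2} \<union> {line_through (mid_dir N j) | j. j < N div 2}
     else {line_through (node N j) | j. j < N})"

definition edge_sym_cond :: "nat \<Rightarrow> (nat \<Rightarrow> nat) \<Rightarrow> complex set \<Rightarrow> nat \<Rightarrow> bool" where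
  "edge_sym_cond N p L c \<longleftrightarrow>
     (\<forall>n<N. node N n \<in> L \<longrightarrow> fst (edge_col N p n) = - snd (edge_col N p n)) \<and>
     (\<forall>n<N. node N n \<notin> L \<longrightarrow>
        edge_col N p (nat ((int c - int n) mod int N)) = neg_sort (edge_col N p n))"

end

theory Submission
  imports Defs "HOL-Library.Real_Mod"
begin


definition ndi :: "nat \<Rightarrow> int \<Rightarrow> complex" where
  "ndi N t = cis (- 2 * pi * real_of_int t / real N)"

lemma node_ndi: "node N k = ndi N (int k)"
  by (simp add: node_def ndi_def)

lemma ndi_add: "ndi N s * ndi N t = ndi N (s + t)"
proof -
  have "- 2 * pi * real_of_int s / real N + - 2 * pi * real_of_int t / real N = - 2 * pi * real_of_int (s + t) / real N"
    by (cases "N = 0") (auto simp: field_simps)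
  then show ?thesis unfolding ndi_def cis_mult by simp
qed

lemma ndi_cnj: "cnj (ndi N t) = ndi N (- t)"
  by (simp add: ndi_def cis_cnj)

lemma ndi_mult_N: "N > 0 \<Longrightarrow> ndi N (int N * q) = 1"
proof -
  assume "N > 0"
  have eq: "- 2 * pi * real_of_int (int N * q) / real N = 2 * pi * real_of_int (- q)"
    using \<open>N > 0\<close> by (simp add: field_simps)
  then show ?thesis unfolding ndi_def by (subst eq) (rule cis_multiple_2pi, simp)
qed

lemma ndi_mod: "N > 0 \<Longrightarrow> ndi N (t mod int N) = ndi N t"
proof -
  assume N: "N > 0"
  have "t = t mod int N + int N * (t div int N)" by simp
  then have "ndi N t = ndi N (t mod int N) * ndi N (int N * (t div int N))"
    by (metis ndi_add)
  then show ?thesis using ndi_mult_N[OF N] by simp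
qed

lemma ndi_inj: assumes N: "N > 0" and e: "ndi N s = ndi N t" shows "s mod int N = t mod int N"
proof -
  have "cis (- 2 * pi * real_of_int s / real N - (- 2 * pi * real_of_int t / real N)) = 1"
    using e unfolding ndi_def cis_divide[symmetric] by simp
  then obtain n where n: "- 2 * pi * real_of_int s / real N - (- 2 * pi * real_of_int t / real N) = of_int n * (2 * pi)"
    using cis_eq_1_iff by blast
  then have "2 * pi * (real_of_int t - real_of_int s) = 2 * pi * (of_int n * real N)"
    using N by (simp add: field_simps)
  then have "real_of_int t - real_of_int s = of_int n * real N" by simp
  then have "t - s = n * int N" by (metis of_int_diff of_int_eq_iff of_int_mult of_int_of_nat_eq)
  then have "t = s + n * int N" by simp
  then show ?thesis by simp
qed

lemma node_inj: "a < N \<Longrightarrow> b < N \<Longrightarrow> node N a = node N b \<Longrightarrow> a = b"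
  using ndi_inj[of N "int a" "int b"] by (simp add: node_ndi)

lemma node_mod: "N > 0 \<Longrightarrow> c \<ge> 0 \<Longrightarrow> ndi N c = node N (nat (c mod int N))"
  by (simp add: node_ndi ndi_mod)

lemma reflect_linear: "linear (reflect u)"
  by (rule linearI) (simp_all add: reflect_def algebra_simps scaleR_conv_of_real)

lemma line_eq:
  assumes u: "u \<noteq> 0" and v: "v \<noteq> 0" and e: "u / cnj u = v / cnj v"
  shows "line_through u = line_through v"
proof -
  have cu: "cnj u \<noteq> 0" "cnj v \<noteq> 0" using u v by auto
  have "u * cnj v = v * cnj u" using e cu by (simp add: field_simps)
  then have r: "cnj (u * cnj v) = u * cnj v" by (simp add: mult.commute)
  define q where "q = Re (u * cnj v) / (cmod v)^2"
  have "u * cnj v = of_real (Re (u * cnj v))" using r by (auto simp: complex_eq_iff algebra_simps)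
  then have "u * cnj v * v = of_real (Re (u * cnj v)) * v" by simp
  moreover have "cnj v * v = of_real ((cmod v)^2)" using complex_norm_square[of v] by (simp add: mult.commute)
  ultimately have uq: "u * of_real ((cmod v)^2) = of_real (Re (u * cnj v)) * v" by (metis mult.assoc)
  have "u = of_real q * v" unfolding q_def using uq v by (simp add: field_simps)
  then have q0: "q \<noteq> 0" using u by auto
  show ?thesis
  proof (rule set_eqI, rule iffI)
    fix z assume "z \<in> line_through u"
    then obtain t where "z = of_real t * u" unfolding line_through_def by auto
    then have "z = of_real (t*q) * v" using \<open>u = _\<close> by simp
    then show "z \<in> line_through v" unfolding line_through_def by blast
  next
    fix z assume "z \<in> line_through v"
    then obtain t where "z = of_real t * v" unfolding line_through_def by auto
    then have "z = of_real (t/q) * u" using \<open>u = _\<close> q0 by simp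
    then show "z \<in> line_through u" unfolding line_through_def by blast
  qed
qed

lemma reflect_eq:
  assumes u: "u \<noteq> 0" and e: "line_through u = line_through v"
  shows "reflect u = reflect v"
proof -
  have "u \<in> line_through v" using e unfolding line_through_def by (auto intro: exI[of _ 1])
  then obtain t where t: "u = of_real t * v" unfolding line_through_def by auto
  then have "t \<noteq> 0" using u by auto
  then have "u / cnj u = v / cnj v" using t by simp
  then show ?thesis unfolding reflect_def by auto
qed

lemma reflect_fix: "z \<in> line_through v \<Longrightarrow> v \<noteq> 0 \<Longrightarrow> reflect v z = z"
  unfolding line_through_def reflect_def by auto

lemma w_node: "node N j / cnj (node N j) = ndi N (2 * int j)"
  by (simp add: node_def ndi_def cis_cnj cis_divide field_simps)

lemma w_mid: "mid_dir N j / cnj (mid_dir N j) = ndi N (2 * int j + 1)"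
  by (simp add: mid_dir_def ndi_def cis_cnj cis_divide) (simp add: field_simps)

definition sig :: "nat \<Rightarrow> int \<Rightarrow> nat \<Rightarrow> nat" where
  "sig N c x = nat ((c - int x) mod int N)"

lemma reflect_node:
  assumes N: "N > 0" and w: "v / cnj v = ndi N c"
  shows "reflect v (node N k) = node N (sig N c k)"
proof -
  have "reflect v (node N k) = ndi N c * ndi N (- int k)"
    by (simp add: reflect_def w node_ndi ndi_cnj)
  also have "\<dots> = ndi N (c - int k)" by (simp add: ndi_add)
  also have "\<dots> = node N (sig N c k)" using N by (simp add: sig_def node_ndi ndi_mod)
  finally show ?thesis .
qed



definition ES :: "nat \<Rightarrow> (nat \<Rightarrow> nat) \<Rightarrow> nat set set" where
  "ES N p = (\<lambda>n. {p n, p (Suc n mod N)}) ` {..<N}"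

definition Off :: "nat \<Rightarrow> (nat \<Rightarrow> nat) \<Rightarrow> nat \<Rightarrow> int set" where
  "Off N p x = {(int y - int x) mod int N | y. y < N \<and> {x, y} \<in> ES N p}"

definition negm :: "nat \<Rightarrow> int \<Rightarrow> int" where
  "negm N t = (- t) mod int N"

definition hh :: "nat \<Rightarrow> int \<Rightarrow> int" where
  "hh N r = (if 2 * r < int N then r else if 2 * r = int N then 0 else r - int N)"

lemma path_lt: "is_path N p \<Longrightarrow> n < N \<Longrightarrow> p n < N"
  unfolding is_path_def bij_betw_def by auto

lemma path_inj: "is_path N p \<Longrightarrow> a < N \<Longrightarrow> b < N \<Longrightarrow> p a = p b \<Longrightarrow> a = b"
  unfolding is_path_def bij_betw_def inj_on_def by auto

lemma pos_prop: assumes "is_path N p" "x < N" shows "pos N p x < N \<and> p (pos N p x) = x"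
proof -
  have "\<exists>!k. k < N \<and> p k = x"
  proof -
    from assms have "x \<in> p ` {..<N}" unfolding is_path_def bij_betw_def by auto
    then obtain k where "k < N" "p k = x" by auto
    then show ?thesis using path_inj[OF assms(1)] by blast
  qed
  then show ?thesis unfolding pos_def by (rule theI')
qed

lemma mod_pred: "k < N \<Longrightarrow> Suc ((k + N - 1) mod N) mod N = k"
proof (cases k)
  case 0
  assume "k < N" then show ?thesis using 0 by (cases N) auto
next
  case (Suc m)
  assume "k < N"
  then have "(k + N - 1) mod N = m" using Suc by (simp add: mod_add_right_eq[symmetric])
  then show ?thesis using Suc \<open>k < N\<close> by simp
qed

lemma mod_pred2: "n < N \<Longrightarrow> Suc n mod N = k \<Longrightarrow> n = (k + N - 1) mod N"
proof (cases "Suc n = N")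
  case True
  assume "n < N" "Suc n mod N = k"
  then show ?thesis using True by auto
next
  case False
  assume "n < N" "Suc n mod N = k"
  then have "k = Suc n" using False by auto
  then show ?thesis using \<open>n < N\<close> by simp
qed

lemma nb:
  assumes P: "is_path N p" and N: "N \<ge> 2" and x: "x < N"
  shows "{x, y} \<in> ES N p \<longleftrightarrow> y = p (Suc (pos N p x) mod N) \<or> y = p ((pos N p x + N - 1) mod N)"
proof -
  define k where "k = pos N p x"
  have k: "k < N" "p k = x" using pos_prop[OF P x] k_def by auto
  show ?thesis unfolding k_def[symmetric]
  proof
    assume "{x, y} \<in> ES N p"
    then obtain n where n: "n < N" "{x, y} = {p n, p (Suc n mod N)}" unfolding ES_def by auto
    have sn: "Suc n mod N < N" using N by simp
    from n(2) have "(x = p n \<and> y = p (Suc n mod N)) \<or> (x = p (Suc n mod N) \<and> y = p n)"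
      by (auto simp: doubleton_eq_iff)
    then show "y = p (Suc k mod N) \<or> y = p ((k + N - 1) mod N)"
    proof
      assume a: "x = p n \<and> y = p (Suc n mod N)"
      then have "n = k" using path_inj[OF P n(1) k(1)] k by simp
      then show ?thesis using a by simp
    next
      assume a: "x = p (Suc n mod N) \<and> y = p n"
      then have "Suc n mod N = k" using path_inj[OF P sn k(1)] k by simp
      then have "n = (k + N - 1) mod N" using mod_pred2 n(1) by blast
      then show ?thesis using a by simp
    qed
  next
    assume "y = p (Suc k mod N) \<or> y = p ((k + N - 1) mod N)"
    then show "{x, y} \<in> ES N p"
    proof
      assume "y = p (Suc k mod N)"
      then show ?thesis unfolding ES_def using k by auto
    next
      assume y: "y = p ((k + N - 1) mod N)"
      have "(k + N - 1) mod N < N" using N by simp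
      moreover have "{x, y} = {p ((k + N - 1) mod N), p (Suc ((k + N - 1) mod N) mod N)}"
        using y mod_pred[OF k(1)] k by auto
      ultimately show ?thesis unfolding ES_def by blast
    qed
  qed
qed

lemma step_mod: "step N p n mod int N = pdiff N p n mod int N"
proof -
  define d where "d = pdiff N p n"
  have "(if 2 * \<bar>d\<bar> < int N then d
     else if 2 * \<bar>d\<bar> = int N then int N div 2
     else if d > 0 then d - int N
     else d + int N) mod int N = d mod int N"
  proof -
    have "int N div 2 mod int N = d mod int N" if "2 * \<bar>d\<bar> = int N"
    proof (cases "d \<ge> 0")
      case True
      then have "int N = 2 * d" using that by auto
      then have "int N div 2 = d" by simp
      then show ?thesis by simp
    next
      case False
      then have "int N div 2 = -d" "int N = -2*d" using that by auto
      then have "int N div 2 = d + int N" by simp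
      then show ?thesis by simp
    qed
    then show ?thesis by auto
  qed
  then show ?thesis unfolding step_def d_def Let_def .
qed

lemma pdiff_bound: "is_path N p \<Longrightarrow> n < N \<Longrightarrow> \<bar>pdiff N p n\<bar> < int N"
proof -
  assume P: "is_path N p" "n < N"
  then have "N > 0" by simp
  then have "p n < N" "p (Suc n mod N) < N" using path_lt[OF P(1)] P by auto
  then show ?thesis unfolding pdiff_def by auto
qed

lemma step_bound: "\<bar>pdiff N p n\<bar> < int N \<Longrightarrow> 2 * \<bar>step N p n\<bar> \<le> int N"
  unfolding step_def Let_def by auto



lemma Off_eq:
  assumes P: "is_path N p" and N: "N \<ge> 2" and x: "x < N"
  shows "Off N p x = {step N p (pos N p x) mod int N,
                      (- step N p ((pos N p x + N - 1) mod N)) mod int N}"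
proof -
  define k where "k = pos N p x"
  have k: "k < N" "p k = x" using pos_prop[OF P x] k_def by auto
  define j where "j = (k + N - 1) mod N"
  have j: "j < N" "Suc j mod N = k" using N mod_pred[OF k(1)] by (auto simp: j_def)
  have y1: "p (Suc k mod N) < N" "p j < N" using path_lt[OF P] N j by auto
  have "Off N p x = {(int y - int x) mod int N | y. y = p (Suc k mod N) \<or> y = p j}"
    unfolding Off_def using nb[OF P N x] y1 by (auto simp: k_def j_def)
  also have "\<dots> = {(int (p (Suc k mod N)) - int x) mod int N, (int (p j) - int x) mod int N}"
    by auto
  also have "(int (p (Suc k mod N)) - int x) mod int N = step N p k mod int N"
    using step_mod[of N p k] k by (simp add: pdiff_def)
  also have "(int (p j) - int x) mod int N = (- step N p j) mod int N"
  proof -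
    have "(int (p j) - int x) = - pdiff N p j" using j k by (simp add: pdiff_def)
    then show ?thesis using step_mod[of N p j] by (metis mod_minus_cong)
  qed
  finally show ?thesis unfolding k_def j_def .
qed

lemma Off_range:
  assumes P: "is_path N p" and N: "N \<ge> 2" and x: "x < N"
  shows "Off N p x \<subseteq> {1..<int N}"
proof
  fix t assume "t \<in> Off N p x"
  then obtain y where y: "t = (int y - int x) mod int N" "y < N" "{x, y} \<in> ES N p"
    unfolding Off_def by auto
  have "y \<noteq> x"
  proof
    assume "y = x"
    then obtain n where n: "n < N" "{x} = {p n, p (Suc n mod N)}" using y(3) unfolding ES_def by auto
    then have "p n = p (Suc n mod N)" by auto
    then have "n = Suc n mod N" using path_inj[OF P] n N by simp
    then show False using n(1) N by (cases "Suc n = N") auto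
  qed
  have "(int y - int x) mod int N \<noteq> 0"
  proof (cases "y \<ge> x")
    case True
    then have "(int y - int x) mod int N = int y - int x" using y(2) by (intro mod_pos_pos_trivial) auto
    then show ?thesis using True \<open>y \<noteq> x\<close> by simp
  next
    case False
    then have "(int y - int x + int N) mod int N = int y - int x + int N" using x by (intro mod_pos_pos_trivial) auto
    then show ?thesis using False x by simp
  qed
  moreover have "0 \<le> (int y - int x) mod int N" "(int y - int x) mod int N < int N" using N by auto
  ultimately show "t \<in> {1..<int N}" using y(1) by auto
qed

lemma zh_hh: "2 * \<bar>a\<bar> \<le> int N \<Longrightarrow> N > 0 \<Longrightarrow> zero_half N a = hh N (a mod int N)"
proof -
  assume a: "2 * \<bar>a\<bar> \<le> int N" and N: "N > 0"
  show ?thesis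
  proof (cases "a \<ge> 0")
    case True
    have "a < int N" using a N True by linarith
    then have "a mod int N = a" using True by (simp add: mod_pos_pos_trivial)
    then show ?thesis using True a unfolding zero_half_def hh_def by auto
  next
    case False
    then have "(a + int N) mod int N = a + int N" using a by (intro mod_pos_pos_trivial) auto
    then have "a mod int N = a + int N" by simp
    then show ?thesis using False a unfolding zero_half_def hh_def by auto
  qed
qed

lemma hh_inj: "inj_on (hh N) {1..<int N}"
  unfolding inj_on_def hh_def by (simp split: if_splits)

lemma hh_neg: "t \<in> {1..<int N} \<Longrightarrow> hh N (negm N t) = - hh N t"
proof -
  assume t: "t \<in> {1..<int N}"
  then have "(- t + int N) mod int N = - t + int N" by (intro mod_pos_pos_trivial) auto
  then have "negm N t = int N - t" unfolding negm_def by simp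
  then show ?thesis using t unfolding hh_def by auto
qed

lemma negm_range: "t \<in> {1..<int N} \<Longrightarrow> negm N t \<in> {1..<int N}"
proof -
  assume t: "t \<in> {1..<int N}"
  then have "(- t + int N) mod int N = - t + int N" by (intro mod_pos_pos_trivial) auto
  then have "negm N t = int N - t" unfolding negm_def by simp
  then show ?thesis using t by auto
qed

lemma sorted_iff: "((min a b, max a b) = (min c d, max c d)) \<longleftrightarrow> {a, b} = {c, d::int}"
  by (cases "a \<le> b"; cases "c \<le> d") (auto simp: doubleton_eq_iff min_def max_def)

lemma edge_col_Off:
  assumes P: "is_path N p" and N: "N \<ge> 2" and x: "x < N"
  obtains A B where "Off N p x = {A, B}"
    "edge_col N p x = (min (hh N A) (hh N B), max (hh N A) (hh N B))"
proof -
  define k where "k = pos N p x"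
  define a where "a = step N p k"
  define b where "b = - step N p ((k + N - 1) mod N)"
  have jN: "(k + N - 1) mod N < N" using N by simp
  have ba: "2 * \<bar>a\<bar> \<le> int N" unfolding a_def
    by (rule step_bound, rule pdiff_bound[OF P]) (use pos_prop[OF P x] k_def in auto)
  have bb: "2 * \<bar>b\<bar> \<le> int N" unfolding b_def using step_bound[OF pdiff_bound[OF P jN]] by simp
  have "edge_col N p x = (min (hh N (a mod int N)) (hh N (b mod int N)), max (hh N (a mod int N)) (hh N (b mod int N)))"
    unfolding edge_col_def Let_def k_def[symmetric] a_def[symmetric] b_def[symmetric]
    using zh_hh[OF ba] zh_hh[OF bb] N by simp
  moreover have "Off N p x = {a mod int N, b mod int N}"
    using Off_eq[OF P N x] unfolding a_def b_def k_def .
  ultimately show ?thesis using that by blast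
qed

lemma neg_sort_mm: "neg_sort (min a b, max a b) = (min (-a) (-b), max (-a) (-b))"
  unfolding neg_sort_def by auto

lemma col_iff:
  assumes P: "is_path N p" and N: "N \<ge> 2" and x: "x < N" and y: "y < N"
  shows "edge_col N p y = neg_sort (edge_col N p x) \<longleftrightarrow> Off N p y = negm N ` Off N p x"
proof -
  obtain A B where AB: "Off N p x = {A, B}"
    "edge_col N p x = (min (hh N A) (hh N B), max (hh N A) (hh N B))"
    using edge_col_Off[OF P N x] by blast
  obtain C D where CD: "Off N p y = {C, D}"
    "edge_col N p y = (min (hh N C) (hh N D), max (hh N C) (hh N D))"
    using edge_col_Off[OF P N y] by blast
  have r1: "{A, B} \<subseteq> {1..<int N}" "{C, D} \<subseteq> {1..<int N}"
    using Off_range[OF P N x] Off_range[OF P N y] AB CD by auto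
  have r2: "negm N ` {A, B} \<subseteq> {1..<int N}" using r1 negm_range by auto
  have "edge_col N p y = neg_sort (edge_col N p x) \<longleftrightarrow> {hh N C, hh N D} = {- hh N A, - hh N B}"
    unfolding AB CD neg_sort_mm sorted_iff ..
  also have "{- hh N A, - hh N B} = hh N ` (negm N ` {A, B})"
    using r1 hh_neg by auto
  also have "{hh N C, hh N D} = hh N ` {C, D}" by simp
  also have "hh N ` {C, D} = hh N ` (negm N ` {A, B}) \<longleftrightarrow> {C, D} = negm N ` {A, B}"
    by (rule inj_on_image_eq_iff[OF hh_inj r1(2) r2])
  finally show ?thesis unfolding AB CD .
qed



lemma sig_lt: "N > 0 \<Longrightarrow> sig N c x < N"
  unfolding sig_def by (simp add: nat_less_iff)

lemma sig_int: "N > 0 \<Longrightarrow> int (sig N c x) = (c - int x) mod int N"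
  unfolding sig_def by simp

lemma sig_inv: "N > 0 \<Longrightarrow> x < N \<Longrightarrow> sig N c (sig N c x) = x"
proof -
  assume N: "N > 0" and x: "x < N"
  have "int (sig N c (sig N c x)) = (c - (c - int x) mod int N) mod int N"
    using N by (simp add: sig_int)
  also have "\<dots> = (c - (c - int x)) mod int N" by (simp add: mod_diff_right_eq)
  also have "\<dots> = int x" using x by simp
  finally show ?thesis by simp
qed

lemma sig_diff: "N > 0 \<Longrightarrow> (int (sig N c y) - int (sig N c x)) mod int N = (int x - int y) mod int N"
proof -
  assume N: "N > 0"
  have "(int (sig N c y) - int (sig N c x)) mod int N = ((c - int y) mod int N - (c - int x) mod int N) mod int N"
    using N by (simp add: sig_int)
  also have "\<dots> = ((c - int y) - (c - int x)) mod int N" by (simp add: mod_diff_eq)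
  also have "\<dots> = (int x - int y) mod int N" by simp
  finally show ?thesis .
qed

lemma negm_negm: "negm N (negm N t) = t mod int N"
  unfolding negm_def by (simp add: mod_minus_eq)

lemma ES_elem: "is_path N p \<Longrightarrow> e \<in> ES N p \<Longrightarrow> \<exists>x y. e = {x, y} \<and> x < N \<and> y < N"
  unfolding ES_def using path_lt by fastforce

lemma mod_eq_lt: "N > 0 \<Longrightarrow> z < N \<Longrightarrow> w < N \<Longrightarrow> (int z - s) mod int N = (int w - s) mod int N \<Longrightarrow> z = w"
proof -
  assume N: "N > 0" and z: "z < N" and w: "w < N" and e: "(int z - s) mod int N = (int w - s) mod int N"
  have "(int z - s + s) mod int N = (int w - s + s) mod int N"
    using e by (metis mod_add_left_eq)
  then have "int z mod int N = int w mod int N" by simp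
  then show ?thesis using z w by simp
qed

lemma sub_iff:
  assumes P: "is_path N p" and N: "N \<ge> 2"
  shows "(\<forall>e\<in>ES N p. sig N c ` e \<in> ES N p) \<longleftrightarrow> (\<forall>x<N. negm N ` Off N p x \<subseteq> Off N p (sig N c x))"
proof
  assume H: "\<forall>e\<in>ES N p. sig N c ` e \<in> ES N p"
  show "\<forall>x<N. negm N ` Off N p x \<subseteq> Off N p (sig N c x)"
  proof (intro allI impI subsetI)
    fix x t assume x: "x < N" and "t \<in> negm N ` Off N p x"
    then obtain y where y: "t = negm N ((int y - int x) mod int N)" "y < N" "{x, y} \<in> ES N p"
      unfolding Off_def by auto
    have "{sig N c x, sig N c y} \<in> ES N p" using H y(3) by force
    moreover have "t = (int (sig N c y) - int (sig N c x)) mod int N"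
      using y(1) N by (simp add: negm_def sig_diff mod_minus_eq)
    moreover have "sig N c y < N" using N sig_lt by simp
    ultimately show "t \<in> Off N p (sig N c x)" unfolding Off_def by blast
  qed
next
  assume H: "\<forall>x<N. negm N ` Off N p x \<subseteq> Off N p (sig N c x)"
  show "\<forall>e\<in>ES N p. sig N c ` e \<in> ES N p"
  proof
    fix e assume e: "e \<in> ES N p"
    then obtain x y where xy: "e = {x, y}" "x < N" "y < N" using ES_elem[OF P] by blast
    have "(int y - int x) mod int N \<in> Off N p x" unfolding Off_def using xy e by auto
    then have "negm N ((int y - int x) mod int N) \<in> Off N p (sig N c x)" using H xy by blast
    then obtain z where z: "negm N ((int y - int x) mod int N) = (int z - int (sig N c x)) mod int N"
      "z < N" "{sig N c x, z} \<in> ES N p" unfolding Off_def by auto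
    have "(int z - int (sig N c x)) mod int N = (int (sig N c y) - int (sig N c x)) mod int N"
      using z(1) N by (simp add: negm_def sig_diff mod_minus_eq)
    then have "z = sig N c y" using mod_eq_lt[OF _ z(2) sig_lt] N by auto
    then show "sig N c ` e \<in> ES N p" using z(3) xy by simp
  qed
qed

lemma sub_eq_iff:
  assumes P: "is_path N p" and N: "N \<ge> 2"
  shows "(\<forall>x<N. negm N ` Off N p x \<subseteq> Off N p (sig N c x)) \<longleftrightarrow> (\<forall>x<N. Off N p (sig N c x) = negm N ` Off N p x)"
proof
  assume H: "\<forall>x<N. negm N ` Off N p x \<subseteq> Off N p (sig N c x)"
  show "\<forall>x<N. Off N p (sig N c x) = negm N ` Off N p x"
  proof (intro allI impI equalityI)
    fix x assume x: "x < N"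
    show "negm N ` Off N p x \<subseteq> Off N p (sig N c x)" using H x by blast
    show "Off N p (sig N c x) \<subseteq> negm N ` Off N p x"
    proof
      fix t assume t: "t \<in> Off N p (sig N c x)"
      have sx: "sig N c x < N" using N sig_lt by simp
      have "negm N t \<in> Off N p x" using H sx t sig_inv[of N x c] x N by force
      moreover have "t = negm N (negm N t)" using Off_range[OF P N sx] t by (auto simp: negm_negm)
      ultimately show "t \<in> negm N ` Off N p x" by blast
    qed
  qed
next
  assume "\<forall>x<N. Off N p (sig N c x) = negm N ` Off N p x"
  then show "\<forall>x<N. negm N ` Off N p x \<subseteq> Off N p (sig N c x)" by auto
qed

lemma ES_eq_iff:
  assumes P: "is_path N p" and N: "N \<ge> 2"
  shows "((`) (sig N c) ` ES N p = ES N p) \<longleftrightarrow> (\<forall>e\<in>ES N p. sig N c ` e \<in> ES N p)"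
proof
  assume "(`) (sig N c) ` ES N p = ES N p"
  then show "\<forall>e\<in>ES N p. sig N c ` e \<in> ES N p" by auto
next
  assume H: "\<forall>e\<in>ES N p. sig N c ` e \<in> ES N p"
  show "(`) (sig N c) ` ES N p = ES N p"
  proof
    show "(`) (sig N c) ` ES N p \<subseteq> ES N p" using H by auto
    show "ES N p \<subseteq> (`) (sig N c) ` ES N p"
    proof
      fix e assume e: "e \<in> ES N p"
      then obtain x y where xy: "e = {x, y}" "x < N" "y < N" using ES_elem[OF P] by blast
      have "e = sig N c ` (sig N c ` e)" using xy sig_inv[of N _ c] N by auto
      moreover have "sig N c ` e \<in> ES N p" using H e by blast
      ultimately show "e \<in> (`) (sig N c) ` ES N p" by blast
    qed
  qed
qed

lemma comb_iff:
  assumes P: "is_path N p" and N: "N \<ge> 2"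
  shows "((`) (sig N c) ` ES N p = ES N p) \<longleftrightarrow> (\<forall>x<N. edge_col N p (sig N c x) = neg_sort (edge_col N p x))"
proof -
  have "((`) (sig N c) ` ES N p = ES N p) \<longleftrightarrow> (\<forall>x<N. Off N p (sig N c x) = negm N ` Off N p x)"
    using ES_eq_iff[OF P N] sub_iff[OF P N] sub_eq_iff[OF P N] by simp
  also have "\<dots> \<longleftrightarrow> (\<forall>x<N. edge_col N p (sig N c x) = neg_sort (edge_col N p x))"
    using col_iff[OF P N] sig_lt N by simp
  finally show ?thesis .
qed



definition GG :: "nat \<Rightarrow> nat set \<Rightarrow> complex set" where
  "GG N e = convex hull (node N ` e)"

lemma GG_pair: "GG N {a, b} = closed_segment (node N a) (node N b)"
  unfolding GG_def by (simp add: segment_convex_hull)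

lemma node_inj_on: "inj_on (node N) {..<N}"
  using node_inj unfolding inj_on_def by blast

lemma GG_inj: "inj_on (GG N) {e. \<exists>a b. e = {a, b} \<and> a < N \<and> b < N}"
proof (rule inj_onI)
  fix e f assume "e \<in> {e. \<exists>a b. e = {a, b} \<and> a < N \<and> b < N}" "f \<in> {e. \<exists>a b. e = {a, b} \<and> a < N \<and> b < N}"
    and eq: "GG N e = GG N f"
  then obtain a b c d where abcd: "e = {a, b}" "f = {c, d}" "a < N" "b < N" "c < N" "d < N" by blast
  have "{node N a, node N b} = {node N c, node N d}" using eq abcd GG_pair closed_segment_eq by metis
  then have "node N ` {a, b} = node N ` {c, d}" by simp
  moreover have "{a, b} \<subseteq> {..<N}" "{c, d} \<subseteq> {..<N}" using abcd by auto
  ultimately have "{a, b} = {c, d}" using inj_on_image_eq_iff[OF node_inj_on] by blast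
  then show "e = f" using abcd by simp
qed

lemma shape_GG: "shape N p = GG N ` ES N p"
  unfolding shape_def ES_def by (auto simp: GG_pair image_iff)

lemma refl_shape:
  assumes N: "N > 0" and w: "v / cnj v = ndi N c"
  shows "(\<lambda>C. reflect v ` C) ` shape N p = GG N ` ((`) (sig N c) ` ES N p)"
proof -
  have "reflect v ` GG N {a, b} = GG N (sig N c ` {a, b})" for a b
    unfolding GG_pair using closed_segment_linear_image[OF reflect_linear, of v "node N a" "node N b"]
      reflect_node[OF N w] by (simp add: GG_pair)
  then have "(\<lambda>C. reflect v ` C) ` GG N ` ES N p = GG N ` ((`) (sig N c) ` ES N p)"
    unfolding ES_def image_image by simp
  then show ?thesis using shape_GG by simp
qed

lemma sym_iff_ES:
  assumes P: "is_path N p" and N: "N \<ge> 2" and v: "v \<noteq> 0" and w: "v / cnj v = ndi N c"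
  shows "is_sym_line N p (line_through v) \<longleftrightarrow> (`) (sig N c) ` ES N p = ES N p"
proof -
  have "is_sym_line N p (line_through v) \<longleftrightarrow> (\<lambda>C. reflect v ` C) ` shape N p = shape N p"
  proof
    assume "is_sym_line N p (line_through v)"
    then obtain u where u: "u \<noteq> 0" "line_through v = line_through u"
      "(\<lambda>C. reflect u ` C) ` shape N p = shape N p" unfolding is_sym_line_def by blast
    have e: "reflect u = reflect v" by (rule reflect_eq[OF u(1) u(2)[symmetric]])
    show "(\<lambda>C. reflect v ` C) ` shape N p = shape N p" using u(3) unfolding e .
  next
    assume "(\<lambda>C. reflect v ` C) ` shape N p = shape N p"
    then show "is_sym_line N p (line_through v)" unfolding is_sym_line_def using v by (intro exI[of _ v]) simp
  qed
  also have "\<dots> \<longleftrightarrow> GG N ` ((`) (sig N c) ` ES N p) = GG N ` ES N p"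
  proof -
    have "(\<lambda>C. reflect v ` C) ` shape N p = GG N ` ((`) (sig N c) ` ES N p)"
      using refl_shape[OF _ w, of p] N by simp
    then show ?thesis by (simp only: shape_GG)
  qed
  also have "\<dots> \<longleftrightarrow> (`) (sig N c) ` ES N p = ES N p"
  proof (rule inj_on_image_eq_iff[OF GG_inj])
    show "ES N p \<subseteq> {e. \<exists>a b. e = {a, b} \<and> a < N \<and> b < N}" using ES_elem[OF P] by blast
    show "(`) (sig N c) ` ES N p \<subseteq> {e. \<exists>a b. e = {a, b} \<and> a < N \<and> b < N}"
    proof
      fix f assume "f \<in> (`) (sig N c) ` ES N p"
      then obtain e where e: "e \<in> ES N p" "f = sig N c ` e" by blast
      then obtain a b where "e = {a, b}" using ES_elem[OF P] by blast
      then have "f = {sig N c a, sig N c b}" using e by simp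
      moreover have "sig N c a < N" "sig N c b < N" using sig_lt N by auto
      ultimately show "f \<in> {e. \<exists>a b. e = {a, b} \<and> a < N \<and> b < N}" by blast
    qed
  qed
  finally show ?thesis .
qed

lemma col_le: "fst (edge_col N p n) \<le> snd (edge_col N p n)"
  unfolding edge_col_def Let_def by simp

lemma fix_iff: "fst (edge_col N p n) = - snd (edge_col N p n) \<longleftrightarrow> edge_col N p n = neg_sort (edge_col N p n)"
  using col_le[of N p n] unfolding neg_sort_def by (cases "edge_col N p n") auto

lemma cand_iff:
  assumes P: "is_path N p" and N: "N \<ge> 2" and v: "v \<noteq> 0" and w: "v / cnj v = ndi N (int c)"
  shows "is_sym_line N p (line_through v) \<longleftrightarrow> edge_sym_cond N p (line_through v) c"
proof -
  have fx: "sig N (int c) n = n" if "n < N" "node N n \<in> line_through v" for n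
  proof -
    have "node N (sig N (int c) n) = node N n"
      using reflect_node[OF _ w, of n] reflect_fix[OF that(2) v] N by simp
    moreover have "sig N (int c) n < N" using sig_lt N by simp
    ultimately show ?thesis using node_inj that(1) by blast
  qed
  have "edge_sym_cond N p (line_through v) c \<longleftrightarrow> (\<forall>x<N. edge_col N p (sig N (int c) x) = neg_sort (edge_col N p x))"
    unfolding edge_sym_cond_def sig_def[symmetric]
  proof (intro iffI allI impI)
    fix x assume H: "(\<forall>n<N. node N n \<in> line_through v \<longrightarrow> fst (edge_col N p n) = - snd (edge_col N p n)) \<and>
      (\<forall>n<N. node N n \<notin> line_through v \<longrightarrow> edge_col N p (sig N (int c) n) = neg_sort (edge_col N p n))"
      and x: "x < N"
    show "edge_col N p (sig N (int c) x) = neg_sort (edge_col N p x)"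
    proof (cases "node N x \<in> line_through v")
      case True
      then show ?thesis using H x fx[OF x True] fix_iff by simp
    next
      case False
      then show ?thesis using H x by simp
    qed
  next
    assume H: "\<forall>x<N. edge_col N p (sig N (int c) x) = neg_sort (edge_col N p x)"
    show "(\<forall>n<N. node N n \<in> line_through v \<longrightarrow> fst (edge_col N p n) = - snd (edge_col N p n)) \<and>
      (\<forall>n<N. node N n \<notin> line_through v \<longrightarrow> edge_col N p (sig N (int c) n) = neg_sort (edge_col N p n))"
    proof (intro conjI allI impI)
      fix n assume n: "n < N" "node N n \<in> line_through v"
      show "fst (edge_col N p n) = - snd (edge_col N p n)" using H n fx[OF n] fix_iff by metis
    next
      fix n assume n: "n < N" "node N n \<notin> line_through v"
      show "edge_col N p (sig N (int c) n) = neg_sort (edge_col N p n)" using H n by simp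
    qed
  qed
  then show ?thesis using sym_iff_ES[OF P N v w] comb_iff[OF P N] by simp
qed



lemma node_nz: "node N j \<noteq> 0" unfolding node_def by simp
lemma mid_nz: "mid_dir N j \<noteq> 0" unfolding mid_dir_def by simp

lemma w_node': "node N j / cnj (node N j) = ndi N (int (2 * j))"
  using w_node[of N j] by simp
lemma w_mid': "mid_dir N j / cnj (mid_dir N j) = ndi N (int (2 * j + 1))"
proof -
  have "int (2 * j + 1) = 2 * int j + 1" by simp
  then show ?thesis by (simp only: w_mid)
qed

lemma sym_w:
  assumes P: "is_path N p" and N: "N \<ge> 2" and u: "u \<noteq> 0"
    and img: "(\<lambda>C. reflect u ` C) ` shape N p = shape N p"
  shows "\<exists>m<N. u / cnj u = ndi N (int m)"
proof -
  have x0: "0 < N" using N by simp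
  obtain k0 where k0: "k0 < N" "p k0 = 0" using pos_prop[OF P x0] by blast
  define S where "S = closed_segment (node N (p k0)) (node N (p (Suc k0 mod N)))"
  have "S \<in> shape N p" unfolding S_def shape_def using k0(1) by auto
  then have "reflect u ` S \<in> (\<lambda>C. reflect u ` C) ` shape N p" by (rule imageI)
  then have "reflect u ` S \<in> shape N p" unfolding img .
  then obtain n where n: "n < N" "reflect u ` S = closed_segment (node N (p n)) (node N (p (Suc n mod N)))"
    unfolding shape_def by blast
  have RS: "reflect u ` S = closed_segment (reflect u (node N (p k0))) (reflect u (node N (p (Suc k0 mod N))))"
    unfolding S_def by (rule closed_segment_linear_image[OF reflect_linear, symmetric])
  have "{reflect u (node N (p k0)), reflect u (node N (p (Suc k0 mod N)))} = {node N (p n), node N (p (Suc n mod N))}"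
    using closed_segment_eq[THEN iffD1, OF trans[OF RS[symmetric] n(2)]] .
  note E = this
  have "reflect u (node N (p k0)) \<in> {reflect u (node N (p k0)), reflect u (node N (p (Suc k0 mod N)))}"
    by (rule insertI1)
  then have "reflect u (node N (p k0)) \<in> {node N (p n), node N (p (Suc n mod N))}"
    by (simp only: E)
  then have "reflect u (node N 0) \<in> {node N (p n), node N (p (Suc n mod N))}" using k0(2) by simp
  moreover have "reflect u (node N 0) = u / cnj u" unfolding reflect_def node_def by simp
  moreover have "p n < N" "p (Suc n mod N) < N" using path_lt[OF P] n x0 by auto
  ultimately have "\<exists>m<N. u / cnj u = node N m" by auto
  then show ?thesis unfolding node_ndi .
qed

lemma sym_cand:
  assumes P: "is_path N p" and N: "N \<ge> 2" and S: "is_sym_line N p L"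
  shows "L \<in> candidate_lines N"
proof -
  obtain u where u: "u \<noteq> 0" "L = line_through u" "(\<lambda>C. reflect u ` C) ` shape N p = shape N p"
    using S unfolding is_sym_line_def by blast
  obtain m where m: "m < N" "u / cnj u = ndi N (int m)" using sym_w[OF P N u(1) u(3)] by blast
  show ?thesis
  proof (cases "even N")
    case True
    show ?thesis
    proof (cases "even m")
      case True
      define j where "j = m div 2"
      have j: "2 * j = m" "j < N div 2" using True m(1) \<open>even N\<close> unfolding j_def by auto
      have wj: "u / cnj u = node N j / cnj (node N j)" using m(2) w_node'[of N j] j(1) by simp
      have "L = line_through (node N j)" using u(2) line_eq[OF u(1) node_nz wj] by simp
      then show ?thesis unfolding candidate_lines_def using \<open>even N\<close> j by auto
    next
      case False
      define j where "j = m div 2"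
      have j: "2 * j + 1 = m" "j < N div 2" using False m(1) \<open>even N\<close> unfolding j_def by auto
      have wj: "u / cnj u = mid_dir N j / cnj (mid_dir N j)" unfolding m(2) w_mid'[of N j] j(1) ..
      have "L = line_through (mid_dir N j)" using u(2) line_eq[OF u(1) mid_nz wj] by simp
      then show ?thesis unfolding candidate_lines_def using \<open>even N\<close> j by auto
    qed
  next
    case False
    show ?thesis
    proof (cases "even m")
      case True
      define j where "j = m div 2"
      have j: "2 * j = m" "j < N" using True m(1) unfolding j_def by auto
      have wj: "u / cnj u = node N j / cnj (node N j)" using m(2) w_node'[of N j] j(1) by simp
      have "L = line_through (node N j)" using u(2) line_eq[OF u(1) node_nz wj] by simp
      then show ?thesis unfolding candidate_lines_def using \<open>odd N\<close> j by auto
    next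
      case False
      define j where "j = (m + N) div 2"
      have j: "2 * j = m + N" "j < N" using False \<open>odd N\<close> m(1) unfolding j_def by auto
      have "ndi N (int (2 * j)) = ndi N (int m) * ndi N (int N * 1)"
        unfolding ndi_add j(1) by simp
      then have "ndi N (int (2 * j)) = ndi N (int m)" using ndi_mult_N[of N 1] N by simp
      then have wj: "u / cnj u = node N j / cnj (node N j)" using m(2) w_node'[of N j] by simp
      have "L = line_through (node N j)" using u(2) line_eq[OF u(1) node_nz wj] by simp
      then show ?thesis unfolding candidate_lines_def using \<open>odd N\<close> j by auto
    qed
  qed
qed

lemma cand_card: "finite (candidate_lines N) \<and> card (candidate_lines N) \<le> N"
proof -
  have e1: "{line_through (node N j) | j. j < M} = (\<lambda>j. line_through (node N j)) ` {..<M}" for M by auto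
  have e2: "{line_through (mid_dir N j) | j. j < M} = (\<lambda>j. line_through (mid_dir N j)) ` {..<M}" for M by auto
  show ?thesis
  proof (cases "even N")
    case True
    have c1: "card ((\<lambda>j. line_through (node N j)) ` {..<N div 2}) \<le> N div 2"
      using card_image_le[of "{..<N div 2}"] by simp
    have c2: "card ((\<lambda>j. line_through (mid_dir N j)) ` {..<N div 2}) \<le> N div 2"
      using card_image_le[of "{..<N div 2}"] by simp
    have "card ((\<lambda>j. line_through (node N j)) ` {..<N div 2} \<union> (\<lambda>j. line_through (mid_dir N j)) ` {..<N div 2}) \<le> N div 2 + N div 2"
      using card_Un_le c1 c2 by (meson add_mono order_trans)
    also have "\<dots> = N" using True by presburger
    finally show ?thesis unfolding candidate_lines_def e1 e2 using True by simp
  next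
    case False
    have "card ((\<lambda>j. line_through (node N j)) ` {..<N}) \<le> N"
      using card_image_le[of "{..<N}"] by simp
    then show ?thesis unfolding candidate_lines_def e1 using False by simp
  qed
qed

theorem mainTheorem7:
  fixes N :: nat and p :: "nat \<Rightarrow> nat"
  assumes "N \<ge> 2" and "star_path N p"
  shows "{L. is_sym_line N p L} \<subseteq> candidate_lines N
    \<and> 0 \<le> O_ref N p \<and> O_ref N p \<le> N
    \<and> (even N \<longrightarrow> (\<forall>j < N div 2.
           (is_sym_line N p (line_through (node N j)) \<longleftrightarrow>
            edge_sym_cond N p (line_through (node N j)) (2 * j)) \<and>
           (is_sym_line N p (line_through (mid_dir N j)) \<longleftrightarrow>
            edge_sym_cond N p (line_through (mid_dir N j)) (2 * j + 1))))
    \<and> (odd N \<longrightarrow> (\<forall>j < N.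
           is_sym_line N p (line_through (node N j)) \<longleftrightarrow>
           edge_sym_cond N p (line_through (node N j)) (2 * j)))"
proof -
  have P: "is_path N p" using assms(2) unfolding star_path_def by simp
  have sub: "{L. is_sym_line N p L} \<subseteq> candidate_lines N" using sym_cand[OF P assms(1)] by blast
  have "O_ref N p \<le> card (candidate_lines N)"
    unfolding O_ref_def using card_mono[OF _ sub] cand_card by blast
  then have le: "O_ref N p \<le> N" using cand_card[of N] by linarith
  have ev: "\<forall>j < N div 2.
           (is_sym_line N p (line_through (node N j)) \<longleftrightarrow>
            edge_sym_cond N p (line_through (node N j)) (2 * j)) \<and>
           (is_sym_line N p (line_through (mid_dir N j)) \<longleftrightarrow>
            edge_sym_cond N p (line_through (mid_dir N j)) (2 * j + 1))"
    using cand_iff[OF P assms(1) node_nz w_node'] cand_iff[OF P assms(1) mid_nz w_mid'] by blast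
  have od: "\<forall>j < N.
           is_sym_line N p (line_through (node N j)) \<longleftrightarrow>
           edge_sym_cond N p (line_through (node N j)) (2 * j)"
    using cand_iff[OF P assms(1) node_nz w_node'] by blast
  show ?thesis using sub le ev od by simp
qed


end
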